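(* Let $\mathbf P$ be a cyclic CFSM protocol with the rational channel property and communication graph $(N,E)$, and let $\beta\in E$. A composite state $S'$ is not stable if and only if there is a family of regular sets $Q(S)\subseteq M_\beta^*$, $S\in\prod_{j\in N}K_j$, consistent with respect to $\mathbf P$ and $\beta$, such that $\lambda\in Q(S^0)$ and $\lambda\notin Q(S')$.
   Context: A CFSM protocol $\mathbf P$ has a finite directed communication graph $G=(N,E)$ (edge $\xi$ has tail $-\xi$, head $+\xi$), pairwise disjoint finite message sets $M_\xi$, and for each $j\in N$ a finite state machine $F_j=(K_j,\Sigma_j,T_j,h_j)$: finite state set $K_j$, initial state $h_j$, alphabet $\Sigma_j=\{+b: b\in M_\xi,\ j=+\xi\}\cup\{-b: b\in M_\xi,\ j=-\xi\}$, transitions $T_j\subseteq K_j\times\Sigma_j\times K_j$ ($+b$ = receive, $-b$ = send). A composite state is $S=(p_j:j\in N)$; a channel content is $C=(x_\xi:\xi\in E)$, $x_\xi\in M_\xi^*$; global states are pairs $(S,C)$; $C^0$ has all components equal to the empty word $\lambda$; $S^0=(h_j:j\in N)$ and $(S^0,C^0)$ is the initial global state. A step: some machine $F_i$ takes $p_i\xrightarrow{-b}q_i$ with $b\in M_\beta$, $i=-\beta$, appending $b$ to the end of $x_\beta$; or takes $p_i\xrightarrow{+b}q_i$ with $b\in M_\beta$, $i=+\beta$, provided $x_\beta$ begins with $b$, removing it; all else unchanged. $\vdash^*$ means reachability by finitely many steps. A composite state $S$ is stable if $(S^0,C^0)\vdash^*(S,C^0)$. $\mathbf L(S)=\{C:(S^0,C^0)\vdash^*(S,C)\}$.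 A subset of $\prod_{\xi\in E}M_\xi^*$ is rational if it belongs to the smallest family containing finite sets and closed under union, componentwise product and Kleene star; $\mathbf P$ has the rational channel property if every $\mathbf L(S)$ is rational. $\mathbf P$ is cyclic if $G$ is a directed cycle. A family $Q(S)\subseteq M_\beta^*$ is consistent with respect to $\mathbf P$ and $\beta$ if whenever $(S,(x_\xi))\vdash^*(S',(x'_\xi))$ with $x_\xi=x'_\xi=\lambda$ for $\xi\neq\beta$ and $x_\beta\in Q(S)$, then $x'_\beta\in Q(S')$. *)

theory Defs
  imports Main
begin

(* Actions of a machine: Snd b is the label -b (send), Rcv b is the label +b (receive). *)
datatype 'm act = Snd 'm | Rcv 'm

(* Nodes N = UNIV :: 'n set, edges E = UNIV :: 'e set (both finite types).
   src e = -e (tail), dst e = +e (head); M e = message set of edge e;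
   K j = state set, h j = initial state, T j = transition relation of machine F_j. *)

definition alphabet ::
  "('e \<Rightarrow> 'n) \<Rightarrow> ('e \<Rightarrow> 'n) \<Rightarrow> ('e \<Rightarrow> 'm set) \<Rightarrow> 'n \<Rightarrow> 'm act set" where
  "alphabet src dst M j =
     {Rcv b | b \<xi>. b \<in> M \<xi> \<and> j = dst \<xi>} \<union> {Snd b | b \<xi>. b \<in> M \<xi> \<and> j = src \<xi>}"

definition cfsm_protocol ::
  "('e::finite \<Rightarrow> 'n::finite) \<Rightarrow> ('e \<Rightarrow> 'n) \<Rightarrow> ('e \<Rightarrow> 'm set) \<Rightarrow>
   ('n \<Rightarrow> 's set) \<Rightarrow> ('n \<Rightarrow> 's) \<Rightarrow> ('n \<Rightarrow> ('s \<times> 'm act \<times> 's) set) \<Rightarrow> bool" where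
  "cfsm_protocol src dst M K h T \<longleftrightarrow>
     (\<forall>\<xi>. finite (M \<xi>)) \<and>
     (\<forall>\<xi> \<eta>. \<xi> \<noteq> \<eta> \<longrightarrow> M \<xi> \<inter> M \<eta> = {}) \<and>
     (\<forall>j. finite (K j) \<and> h j \<in> K j \<and> T j \<subseteq> K j \<times> alphabet src dst M j \<times> K j)"

definition composite_states :: "('n \<Rightarrow> 's set) \<Rightarrow> ('n \<Rightarrow> 's) set" where
  "composite_states K = {S. \<forall>j. S j \<in> K j}"

inductive cfsm_step ::
  "('e \<Rightarrow> 'n) \<Rightarrow> ('e \<Rightarrow> 'n) \<Rightarrow> ('e \<Rightarrow> 'm set) \<Rightarrow> ('n \<Rightarrow> ('s \<times> 'm act \<times> 's) set) \<Rightarrow>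
   ('n \<Rightarrow> 's) \<times> ('e \<Rightarrow> 'm list) \<Rightarrow> ('n \<Rightarrow> 's) \<times> ('e \<Rightarrow> 'm list) \<Rightarrow> bool"
  for src dst M T where
  send: "\<lbrakk> b \<in> M \<beta>; i = src \<beta>; (S i, Snd b, q) \<in> T i \<rbrakk>
         \<Longrightarrow> cfsm_step src dst M T (S, C) (S(i := q), C(\<beta> := C \<beta> @ [b]))"
| recv: "\<lbrakk> b \<in> M \<beta>; i = dst \<beta>; (S i, Rcv b, q) \<in> T i; C \<beta> = b # w \<rbrakk>
         \<Longrightarrow> cfsm_step src dst M T (S, C) (S(i := q), C(\<beta> := w))"

abbreviation cfsm_reach where
  "cfsm_reach src dst M T \<equiv> (cfsm_step src dst M T)\<^sup>*\<^sup>*"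

definition empty_channels :: "'e \<Rightarrow> 'm list" where
  "empty_channels = (\<lambda>_. [])"

definition stable where
  "stable src dst M T h S \<longleftrightarrow> cfsm_reach src dst M T (h, empty_channels) (S, empty_channels)"

definition chan_lang where
  "chan_lang src dst M T h S = {C. cfsm_reach src dst M T (h, empty_channels) (S, C)}"

definition chan_space :: "('e \<Rightarrow> 'm set) \<Rightarrow> ('e \<Rightarrow> 'm list) set" where
  "chan_space M = {C. \<forall>\<xi>. set (C \<xi>) \<subseteq> M \<xi>}"

definition comp_prod :: "('e \<Rightarrow> 'm list) set \<Rightarrow> ('e \<Rightarrow> 'm list) set \<Rightarrow> ('e \<Rightarrow> 'm list) set" where
  "comp_prod A B = {(\<lambda>\<xi>. x \<xi> @ y \<xi>) | x y. x \<in> A \<and> y \<in> B}"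

inductive_set comp_star :: "('e \<Rightarrow> 'm list) set \<Rightarrow> ('e \<Rightarrow> 'm list) set" for A where
  unit: "(\<lambda>_. []) \<in> comp_star A"
| app: "x \<in> A \<Longrightarrow> y \<in> comp_star A \<Longrightarrow> (\<lambda>\<xi>. x \<xi> @ y \<xi>) \<in> comp_star A"

inductive rational_rel :: "('e \<Rightarrow> 'm set) \<Rightarrow> ('e \<Rightarrow> 'm list) set \<Rightarrow> bool" for M where
  fin: "finite A \<Longrightarrow> A \<subseteq> chan_space M \<Longrightarrow> rational_rel M A"
| union: "rational_rel M A \<Longrightarrow> rational_rel M B \<Longrightarrow> rational_rel M (A \<union> B)"
| prod: "rational_rel M A \<Longrightarrow> rational_rel M B \<Longrightarrow> rational_rel M (comp_prod A B)"
| star: "rational_rel M A \<Longrightarrow> rational_rel M (comp_star A)"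

definition rational_channel_property where
  "rational_channel_property src dst M K T h \<longleftrightarrow>
     (\<forall>S \<in> composite_states K. rational_rel M (chan_lang src dst M T h S))"

definition cyclic_graph :: "('e \<Rightarrow> 'n::finite) \<Rightarrow> ('e \<Rightarrow> 'n) \<Rightarrow> bool" where
  "cyclic_graph src dst \<longleftrightarrow>
     bij src \<and>
     (\<exists>f :: nat \<Rightarrow> 'n. bij_betw f {..<card (UNIV :: 'n set)} UNIV \<and>
        (\<forall>e i. i < card (UNIV :: 'n set) \<and> src e = f i \<longrightarrow> dst e = f (Suc i mod card (UNIV :: 'n set))))"

definition lang_conc :: "'a list set \<Rightarrow> 'a list set \<Rightarrow> 'a list set" where
  "lang_conc A B = {x @ y | x y. x \<in> A \<and> y \<in> B}"

inductive_set lang_star :: "'a list set \<Rightarrow> 'a list set" for A where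
  nil: "[] \<in> lang_star A"
| app: "x \<in> A \<Longrightarrow> y \<in> lang_star A \<Longrightarrow> x @ y \<in> lang_star A"

inductive regular_lang :: "'a list set \<Rightarrow> bool" where
  fin: "finite A \<Longrightarrow> regular_lang A"
| union: "regular_lang A \<Longrightarrow> regular_lang B \<Longrightarrow> regular_lang (A \<union> B)"
| conc: "regular_lang A \<Longrightarrow> regular_lang B \<Longrightarrow> regular_lang (lang_conc A B)"
| star: "regular_lang A \<Longrightarrow> regular_lang (lang_star A)"

definition consistent_family where
  "consistent_family src dst M K T \<beta> Q \<longleftrightarrow>
     (\<forall>S \<in> composite_states K. \<forall>S' \<in> composite_states K. \<forall>C C'.
        cfsm_reach src dst M T (S, C) (S', C') \<longrightarrow>
        (\<forall>\<xi>. \<xi> \<noteq> \<beta> \<longrightarrow> C \<xi> = [] \<and> C' \<xi> = []) \<longrightarrow>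
        C \<beta> \<in> Q S \<longrightarrow> C' \<beta> \<in> Q S')"

end

theory Submission
  imports Defs
begin

definition rproj :: "'e \<Rightarrow> ('e \<Rightarrow> 'm list) set \<Rightarrow> 'm list set" where
  "rproj \<beta> A = (\<lambda>C. C \<beta>) ` {C \<in> A. \<forall>\<xi>. \<xi> \<noteq> \<beta> \<longrightarrow> C \<xi> = []}"

lemma rproj_union: "rproj \<beta> (A \<union> B) = rproj \<beta> A \<union> rproj \<beta> B"
  unfolding rproj_def by auto

lemma rproj_prod: "rproj \<beta> (comp_prod A B) = lang_conc (rproj \<beta> A) (rproj \<beta> B)"
proof
  show "rproj \<beta> (comp_prod A B) \<subseteq> lang_conc (rproj \<beta> A) (rproj \<beta> B)"
  proof
    fix w assume "w \<in> rproj \<beta> (comp_prod A B)"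
    then obtain C where C: "C \<in> comp_prod A B" "\<forall>\<xi>. \<xi> \<noteq> \<beta> \<longrightarrow> C \<xi> = []" "w = C \<beta>"
      unfolding rproj_def by blast
    then obtain x y where xy: "x \<in> A" "y \<in> B" "C = (\<lambda>\<xi>. x \<xi> @ y \<xi>)"
      unfolding comp_prod_def by blast
    have "x \<beta> \<in> rproj \<beta> A" unfolding rproj_def using xy C by auto
    moreover have "y \<beta> \<in> rproj \<beta> B" unfolding rproj_def using xy C by auto
    ultimately show "w \<in> lang_conc (rproj \<beta> A) (rproj \<beta> B)"
      unfolding lang_conc_def using C xy by auto
  qed
next
  show "lang_conc (rproj \<beta> A) (rproj \<beta> B) \<subseteq> rproj \<beta> (comp_prod A B)"
  proof
    fix w assume "w \<in> lang_conc (rproj \<beta> A) (rproj \<beta> B)"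
    then obtain x y where x: "x \<in> A" "\<forall>\<xi>. \<xi> \<noteq> \<beta> \<longrightarrow> x \<xi> = []"
      and y: "y \<in> B" "\<forall>\<xi>. \<xi> \<noteq> \<beta> \<longrightarrow> y \<xi> = []" and w: "w = x \<beta> @ y \<beta>"
      unfolding rproj_def lang_conc_def by blast
    have "(\<lambda>\<xi>. x \<xi> @ y \<xi>) \<in> comp_prod A B" unfolding comp_prod_def using x y by blast
    moreover have "\<forall>\<xi>. \<xi> \<noteq> \<beta> \<longrightarrow> (\<lambda>\<xi>. x \<xi> @ y \<xi>) \<xi> = []" using x y by simp
    ultimately have "(\<lambda>\<xi>. x \<xi> @ y \<xi>) \<in> {C \<in> comp_prod A B. \<forall>\<xi>. \<xi> \<noteq> \<beta> \<longrightarrow> C \<xi> = []}" by blast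
    then have "(\<lambda>C. C \<beta>) (\<lambda>\<xi>. x \<xi> @ y \<xi>) \<in> rproj \<beta> (comp_prod A B)"
      unfolding rproj_def by (rule imageI)
    then show "w \<in> rproj \<beta> (comp_prod A B)" using w by simp
  qed
qed

lemma star1: "C \<in> comp_star A \<Longrightarrow> (\<forall>\<xi>. \<xi> \<noteq> \<beta> \<longrightarrow> C \<xi> = []) \<Longrightarrow> C \<beta> \<in> lang_star (rproj \<beta> A)"
proof (induction rule: comp_star.induct)
  case unit
  then show ?case by (simp add: lang_star.nil)
next
  case (app x y)
  have e: "\<forall>\<xi>. \<xi> \<noteq> \<beta> \<longrightarrow> x \<xi> = [] \<and> y \<xi> = []" using app.prems by simp
  have "x \<in> {C \<in> A. \<forall>\<xi>. \<xi> \<noteq> \<beta> \<longrightarrow> C \<xi> = []}" using e app.hyps(1) by blast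
  then have "x \<beta> \<in> rproj \<beta> A" unfolding rproj_def by (rule imageI)
  moreover have "y \<beta> \<in> lang_star (rproj \<beta> A)" using app.IH e by blast
  ultimately show ?case by (simp add: lang_star.app)
qed

lemma star2: "w \<in> lang_star (rproj \<beta> A) \<Longrightarrow> \<exists>C \<in> comp_star A. (\<forall>\<xi>. \<xi> \<noteq> \<beta> \<longrightarrow> C \<xi> = []) \<and> C \<beta> = w"
proof (induction rule: lang_star.induct)
  case nil
  have "(\<lambda>_. []) \<in> comp_star A" by (rule comp_star.unit)
  then show ?case by (intro bexI[of _ "\<lambda>_. []"]) simp_all
next
  case (app x y)
  from app.IH obtain C where C: "C \<in> comp_star A" "\<forall>\<xi>. \<xi> \<noteq> \<beta> \<longrightarrow> C \<xi> = []" "C \<beta> = y" by blast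
  from app.hyps(1) obtain D where D: "D \<in> A" "\<forall>\<xi>. \<xi> \<noteq> \<beta> \<longrightarrow> D \<xi> = []" "D \<beta> = x"
    unfolding rproj_def by (auto simp del: )
  have "(\<lambda>\<xi>. D \<xi> @ C \<xi>) \<in> comp_star A" by (rule comp_star.app[OF D(1) C(1)])
  moreover have "\<forall>\<xi>. \<xi> \<noteq> \<beta> \<longrightarrow> (\<lambda>\<xi>. D \<xi> @ C \<xi>) \<xi> = []"
  proof (intro allI impI)
    fix \<xi> assume "\<xi> \<noteq> \<beta>"
    then have "D \<xi> = []" "C \<xi> = []" using C(2) D(2) by blast+
    then show "(\<lambda>\<xi>. D \<xi> @ C \<xi>) \<xi> = []" by simp
  qed
  moreover have "(\<lambda>\<xi>. D \<xi> @ C \<xi>) \<beta> = x @ y" using C(3) D(3) by simp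
  ultimately show ?case by (intro bexI[of _ "\<lambda>\<xi>. D \<xi> @ C \<xi>"] conjI)
qed

lemma rproj_star: "rproj \<beta> (comp_star A) = lang_star (rproj \<beta> A)"
proof
  show "rproj \<beta> (comp_star A) \<subseteq> lang_star (rproj \<beta> A)"
  proof
    fix w assume "w \<in> rproj \<beta> (comp_star A)"
    then obtain C where c: "C \<in> comp_star A" "\<forall>\<xi>. \<xi> \<noteq> \<beta> \<longrightarrow> C \<xi> = []" "w = C \<beta>"
      unfolding rproj_def by auto
    show "w \<in> lang_star (rproj \<beta> A)" unfolding c(3) by (rule star1[OF c(1) c(2)])
  qed
next
  show "lang_star (rproj \<beta> A) \<subseteq> rproj \<beta> (comp_star A)"
  proof
    fix w assume "w \<in> lang_star (rproj \<beta> A)"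
    from star2[OF this] obtain C where c: "C \<in> comp_star A" "\<forall>\<xi>. \<xi> \<noteq> \<beta> \<longrightarrow> C \<xi> = []" "C \<beta> = w"
      by auto
    have "C \<in> {C \<in> comp_star A. \<forall>\<xi>. \<xi> \<noteq> \<beta> \<longrightarrow> C \<xi> = []}" using c(1,2) by simp
    then have "(\<lambda>C. C \<beta>) C \<in> rproj \<beta> (comp_star A)" unfolding rproj_def by (rule imageI)
    then show "w \<in> rproj \<beta> (comp_star A)" using c(3) by simp
  qed
qed

lemma rat_reg: "rational_rel M A \<Longrightarrow> regular_lang (rproj \<beta> A) \<and> A \<subseteq> chan_space M"
proof (induction rule: rational_rel.induct)
  case (fin A)
  have "finite (rproj \<beta> A)" unfolding rproj_def using fin(1) by simp
  then show ?case using fin(2) by (simp add: regular_lang.fin)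
next
  case (union A B)
  then show ?case by (simp add: rproj_union regular_lang.union)
next
  case (prod A B)
  have "comp_prod A B \<subseteq> chan_space M"
  proof
    fix z assume "z \<in> comp_prod A B"
    then obtain x y where xy: "x \<in> A" "y \<in> B" "z = (\<lambda>\<xi>. x \<xi> @ y \<xi>)"
      unfolding comp_prod_def by blast
    have "x \<in> chan_space M" "y \<in> chan_space M" using xy(1,2) prod.IH by blast+
    then show "z \<in> chan_space M" using xy(3) unfolding chan_space_def by simp
  qed
  then show ?case using prod by (simp add: rproj_prod regular_lang.conc)
next
  case (star A)
  have "x \<in> comp_star A \<Longrightarrow> x \<in> chan_space M" for x
  proof (induction rule: comp_star.induct)
    case unit
    then show ?case unfolding chan_space_def by simp
  next
    case (app x y)
    have "x \<in> chan_space M" using app.hyps(1) star.IH by blast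
    then show ?case using app.IH unfolding chan_space_def by simp
  qed
  then have "comp_star A \<subseteq> chan_space M" by blast
  moreover have "regular_lang (rproj \<beta> (comp_star A))"
    unfolding rproj_star using star.IH by (simp add: regular_lang.star)
  ultimately show ?case by simp
qed

theorem theorem8p6:
  fixes src dst :: "'e::finite \<Rightarrow> 'n::finite"
    and M :: "'e \<Rightarrow> 'm set"
    and K :: "'n \<Rightarrow> 's set" and h :: "'n \<Rightarrow> 's"
    and T :: "'n \<Rightarrow> ('s \<times> 'm act \<times> 's) set"
    and \<beta> :: 'e and S' :: "'n \<Rightarrow> 's"
  assumes "cfsm_protocol src dst M K h T"
    and "cyclic_graph src dst"
    and "rational_channel_property src dst M K T h"
    and "S' \<in> composite_states K"
  shows "\<not> stable src dst M T h S' \<longleftrightarrow>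
    (\<exists>Q :: ('n \<Rightarrow> 's) \<Rightarrow> 'm list set.
       (\<forall>S \<in> composite_states K. regular_lang (Q S) \<and> Q S \<subseteq> lists (M \<beta>)) \<and>
       consistent_family src dst M K T \<beta> Q \<and>
       [] \<in> Q h \<and> [] \<notin> Q S')"
proof
  assume ns: "\<not> stable src dst M T h S'"
  define Q where "Q S = rproj \<beta> (chan_lang src dst M T h S)" for S
  have ec: "C = empty_channels" if "\<forall>\<xi>. \<xi> \<noteq> \<beta> \<longrightarrow> C \<xi> = []" "C \<beta> = []" for C :: "'e \<Rightarrow> 'm list"
    using that unfolding empty_channels_def by (metis ext)
  have "\<forall>S \<in> composite_states K. regular_lang (Q S) \<and> Q S \<subseteq> lists (M \<beta>)"
  proof
    fix S assume "S \<in> composite_states K"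
    then have r: "rational_rel M (chan_lang src dst M T h S)"
      using assms(3) unfolding rational_channel_property_def by blast
    from rat_reg[OF r, of \<beta>] show "regular_lang (Q S) \<and> Q S \<subseteq> lists (M \<beta>)"
      unfolding Q_def rproj_def chan_space_def by auto
  qed
  moreover have "consistent_family src dst M K T \<beta> Q"
    unfolding consistent_family_def
  proof (intro ballI allI impI)
    fix S S2 C C'
    assume st: "cfsm_reach src dst M T (S, C) (S2, C')"
      and e: "\<forall>\<xi>. \<xi> \<noteq> \<beta> \<longrightarrow> C \<xi> = [] \<and> C' \<xi> = []" and q: "C \<beta> \<in> Q S"
    then obtain C1 where C1: "C1 \<in> chan_lang src dst M T h S" "\<forall>\<xi>. \<xi> \<noteq> \<beta> \<longrightarrow> C1 \<xi> = []" "C1 \<beta> = C \<beta>"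
      unfolding Q_def rproj_def by auto
    have "C1 = C" using C1 e by (metis ext)
    then have "cfsm_reach src dst M T (h, empty_channels) (S2, C')"
      using C1(1) st unfolding chan_lang_def by auto
    then show "C' \<beta> \<in> Q S2" unfolding Q_def rproj_def chan_lang_def using e by auto
  qed
  moreover have "[] \<in> Q h"
  proof -
    have "empty_channels \<in> chan_lang src dst M T h h" unfolding chan_lang_def by auto
    moreover have "\<forall>\<xi>. \<xi> \<noteq> \<beta> \<longrightarrow> (empty_channels :: 'e \<Rightarrow> 'm list) \<xi> = []"
      by (simp add: empty_channels_def)
    ultimately have "(\<lambda>C. C \<beta>) (empty_channels :: 'e \<Rightarrow> 'm list) \<in> Q h"
      unfolding Q_def rproj_def by (intro imageI) blast
    then show ?thesis by (simp add: empty_channels_def)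
  qed
  moreover have "[] \<notin> Q S'"
  proof
    assume "[] \<in> Q S'"
    then obtain C where "C \<in> chan_lang src dst M T h S'" "\<forall>\<xi>. \<xi> \<noteq> \<beta> \<longrightarrow> C \<xi> = []" "C \<beta> = []"
      unfolding Q_def rproj_def by auto
    then show False using ns ec unfolding stable_def chan_lang_def by auto
  qed
  ultimately show "\<exists>Q :: ('n \<Rightarrow> 's) \<Rightarrow> 'm list set.
       (\<forall>S \<in> composite_states K. regular_lang (Q S) \<and> Q S \<subseteq> lists (M \<beta>)) \<and>
       consistent_family src dst M K T \<beta> Q \<and>
       [] \<in> Q h \<and> [] \<notin> Q S'" by blast
next
  assume "\<exists>Q :: ('n \<Rightarrow> 's) \<Rightarrow> 'm list set.
       (\<forall>S \<in> composite_states K. regular_lang (Q S) \<and> Q S \<subseteq> lists (M \<beta>)) \<and>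
       consistent_family src dst M K T \<beta> Q \<and>
       [] \<in> Q h \<and> [] \<notin> Q S'"
  then obtain Q where c: "consistent_family src dst M K T \<beta> Q" and q: "[] \<in> Q h" "[] \<notin> Q S'"
    by blast
  have h: "h \<in> composite_states K" using assms(1)
    unfolding cfsm_protocol_def composite_states_def by auto
  show "\<not> stable src dst M T h S'"
  proof
    assume "stable src dst M T h S'"
    then have "cfsm_reach src dst M T (h, empty_channels) (S', empty_channels)"
      unfolding stable_def .
    moreover have "\<forall>\<xi>. \<xi> \<noteq> \<beta> \<longrightarrow> empty_channels \<xi> = [] \<and> (empty_channels :: 'e \<Rightarrow> 'm list) \<xi> = []"
      by (simp add: empty_channels_def)
    moreover have "(empty_channels :: 'e \<Rightarrow> 'm list) \<beta> \<in> Q h" using q(1) by (simp add: empty_channels_def)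
    ultimately have "(empty_channels :: 'e \<Rightarrow> 'm list) \<beta> \<in> Q S'"
      using c h assms(4) unfolding consistent_family_def by blast
    then have "[] \<in> Q S'" by (simp add: empty_channels_def)
    with q(2) show False by simp
  qed
qed

end
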